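(* Let $\mathbf{x}$ be a set of $d'$ distinct real numbers, let $[L,R]$ be an interval of integers (with $L\le R$), and let $n\le d'$ be a nonnegative integer. Consider any probabilistic process $P$ that chooses a uniformly random subset $S\subseteq\mathbf{x}$ of size $n$ and then selects (arbitrarily, possibly depending on $S$) a real interval $I=[I_\ell,I_r]$ such that $|S\cap I|\in[L,R]$. Then \[ \mathop{\mathbb{P}}_{(S,I)\sim P}\left[|\mathbf{x}\cap I|\in\left(\frac12L\frac{d'}{n},\,2R\frac{d'}{n}\right)\right]\ge 1-3d'\exp\left(-\frac{L}{6}\right). \] *)

theory Defs
  imports "HOL-Probability.Probability"
begin

text \<open>The process P: draw S uniformly among the n-subsets of xs, then draw the
  interval endpoints (a,b) (with a \<le> b) from a distribution K S that may depend on S,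
  supported on intervals I = {a..b} with |S \<inter> I| in [L,R].\<close>

definition interval_process ::
  "real set \<Rightarrow> nat \<Rightarrow> (real set \<Rightarrow> (real \<times> real) pmf) \<Rightarrow> (real set \<times> (real \<times> real)) pmf" where
  "interval_process xs n K =
     bind_pmf (pmf_of_set {S. S \<subseteq> xs \<and> card S = n}) (\<lambda>S. map_pmf (\<lambda>I. (S, I)) (K S))"

end

theory Submission
  imports Defs
begin


lemma sum_pow_card:
  fixes c :: real
  assumes "finite B"
  shows "(\<Sum>T\<in>Pow B. c ^ card T) = (1 + c) ^ card B"
  using assms
proof (induction B rule: finite_induct)
  case empty
  then show ?case by simp
next
  case (insert b B)
  have disj: "Pow B \<inter> insert b ` Pow B = {}" using insert by auto
  have inj: "inj_on (insert b) (Pow B)"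
  proof (rule inj_onI)
    fix x y assume "x \<in> Pow B" "y \<in> Pow B" "insert b x = insert b y"
    then show "x = y" using insert(2) by (metis Diff_insert_absorb PowD subsetD)
  qed
  have "(\<Sum>T\<in>Pow (insert b B). c ^ card T) = (\<Sum>T\<in>Pow B. c ^ card T) + (\<Sum>T\<in>insert b ` Pow B. c ^ card T)"
    unfolding Pow_insert using disj insert by (intro sum.union_disjoint) auto
  also have "(\<Sum>T\<in>insert b ` Pow B. c ^ card T) = (\<Sum>T\<in>Pow B. c ^ card (insert b T))"
    using inj by (simp add: sum.reindex)
  also have "\<dots> = (\<Sum>T\<in>Pow B. c * c ^ card T)"
  proof (rule sum.cong)
    fix T assume "T \<in> Pow B"
    then have "finite T" "b \<notin> T" using insert finite_subset by auto
    then show "c ^ card (insert b T) = c * c ^ card T" by simp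
  qed simp
  finally show ?case using insert by (simp add: sum_distrib_left[symmetric] algebra_simps)
qed

lemma choose_ratio:
  assumes "k \<le> n" "n \<le> N"
  shows "real ((N - k) choose (n - k)) * real N ^ k \<le> real n ^ k * real (N choose n)"
  using assms(1)
proof (induction k)
  case 0 then show ?case by simp
next
  case (Suc k)
  then have kn: "k < n" by simp
  have IH: "real ((N - k) choose (n - k)) * real N ^ k \<le> real n ^ k * real (N choose n)"
    using Suc by simp
  have id: "Suc (N - Suc k) * ((N - Suc k) choose (n - Suc k)) = (Suc (N - Suc k) choose Suc (n - Suc k)) * Suc (n - Suc k)"
    by (rule Suc_times_binomial_eq)
  have e1: "Suc (N - Suc k) = N - k" "Suc (n - Suc k) = n - k" using kn assms by auto
  have id2: "real (N - k) * real ((N - Suc k) choose (n - Suc k)) = real ((N - k) choose (n - k)) * real (n - k)"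
    using id unfolding e1 by (metis of_nat_mult)
  have pos: "real (N - k) > 0" using kn assms by simp
  have kk: "real k * real n \<le> real N * real k" using assms
    by (metis mult.commute mult_left_mono of_nat_0_le_iff of_nat_mono)
  have fr: "real (n - k) * real N / real (N - k) \<le> real n"
    using pos kn assms kk by (simp add: field_simps of_nat_diff)
  have "real ((N - Suc k) choose (n - Suc k)) * real N ^ Suc k
      = real ((N - k) choose (n - k)) * real N ^ k * (real (n - k) * real N / real (N - k))"
    using id2 pos by (simp add: field_simps)
  also have "\<dots> \<le> real n ^ k * real (N choose n) * (real (n - k) * real N / real (N - k))"
    using IH by (intro mult_right_mono) auto
  also have "\<dots> \<le> real n ^ k * real (N choose n) * real n"
    using fr by (intro mult_left_mono) auto
  finally show ?case by (simp add: algebra_simps)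
qed

lemma count_supsets:
  assumes "finite U" "T \<subseteq> U"
  shows "real (card {S. S \<subseteq> U \<and> card S = n \<and> T \<subseteq> S}) * real (card U) ^ card T
         \<le> real n ^ card T * real (card {S. S \<subseteq> U \<and> card S = n})"
proof (cases "card T \<le> n")
  case False
  have E: "{S. S \<subseteq> U \<and> card S = n \<and> T \<subseteq> S} = {}"
  proof -
    { fix S assume "S \<subseteq> U" "T \<subseteq> S" "card S = n"
      then have "card T \<le> card S" using assms by (meson card_mono finite_subset)
      then have False using False \<open>card S = n\<close> by simp }
    then show ?thesis by blast
  qed
  show ?thesis unfolding E by simp
next
  case True
  have fT: "finite T" using assms finite_subset by blast
  have bij: "bij_betw (\<lambda>S. S - T) {S. S \<subseteq> U \<and> card S = n \<and> T \<subseteq> S} {S'. S' \<subseteq> U - T \<and> card S' = n - card T}"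
  proof (rule bij_betw_byWitness[where f' = "\<lambda>S'. S' \<union> T"])
    show "\<forall>a\<in>{S. S \<subseteq> U \<and> card S = n \<and> T \<subseteq> S}. a - T \<union> T = a" by auto
    show "\<forall>a'\<in>{S'. S' \<subseteq> U - T \<and> card S' = n - card T}. a' \<union> T - T = a'" by auto
    show "(\<lambda>S. S - T) ` {S. S \<subseteq> U \<and> card S = n \<and> T \<subseteq> S} \<subseteq> {S'. S' \<subseteq> U - T \<and> card S' = n - card T}"
      using assms fT by (auto simp: card_Diff_subset)
    show "(\<lambda>S'. S' \<union> T) ` {S'. S' \<subseteq> U - T \<and> card S' = n - card T} \<subseteq> {S. S \<subseteq> U \<and> card S = n \<and> T \<subseteq> S}"
    proof clarify
      fix S' assume a: "S' \<subseteq> U - T" "card S' = n - card T"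
      then have "finite S'" using assms finite_subset by blast
      then have "card (S' \<union> T) = card S' + card T" using a fT by (subst card_Un_disjoint) auto
      then show "S' \<union> T \<subseteq> U \<and> card (S' \<union> T) = n \<and> T \<subseteq> S' \<union> T" using a True assms by auto
    qed
  qed
  have "card {S. S \<subseteq> U \<and> card S = n \<and> T \<subseteq> S} = card {S'. S' \<subseteq> U - T \<and> card S' = n - card T}"
    using bij_betw_same_card[OF bij] .
  also have "\<dots> = (card U - card T) choose (n - card T)"
    using assms fT by (simp add: n_subsets card_Diff_subset)
  finally have c1: "card {S. S \<subseteq> U \<and> card S = n \<and> T \<subseteq> S} = (card U - card T) choose (n - card T)" .
  have c2: "card {S. S \<subseteq> U \<and> card S = n} = card U choose n" using assms by (simp add: n_subsets)
  show ?thesis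
  proof (cases "n \<le> card U")
    case True
    then show ?thesis unfolding c1 c2 using choose_ratio[OF \<open>card T \<le> n\<close> True] by simp
  next
    case False
    then have "(card U - card T) choose (n - card T) = 0" using \<open>card T \<le> n\<close> card_mono[OF assms] by simp
    then show ?thesis unfolding c1 by (simp del: binomial_eq_0_iff)
  qed
qed


lemma mgf_bound:
  assumes "finite U" "B \<subseteq> U" "card U > 0"
  shows "(\<Sum>S\<in>{S. S \<subseteq> U \<and> card S = n}. (2::real) ^ card (S \<inter> B))
         \<le> (1 + real n / real (card U)) ^ card B * real (card {S. S \<subseteq> U \<and> card S = n})"
proof -
  define SS where "SS = {S. S \<subseteq> U \<and> card S = n}"
  have fS: "finite SS" unfolding SS_def using assms(1) by (rule rev_finite_subset[OF finite_Pow_iff[THEN iffD2]]) auto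
  have fB: "finite B" using assms finite_subset by blast
  have step1: "(2::real) ^ card (S \<inter> B) = (\<Sum>T\<in>Pow B. if T \<subseteq> S then 1 else 0)" for S
  proof -
    have "Pow (S \<inter> B) = {T\<in>Pow B. T \<subseteq> S}" by auto
    moreover have "finite (S \<inter> B)" using fB by simp
    ultimately have "(2::real) ^ card (S \<inter> B) = real (card {T\<in>Pow B. T \<subseteq> S})"
      by (metis card_Pow of_nat_numeral of_nat_power)
    also have "\<dots> = (\<Sum>T\<in>{T\<in>Pow B. T \<subseteq> S}. 1)" by simp
    also have "\<dots> = (\<Sum>T\<in>Pow B. if T \<subseteq> S then 1 else 0)"
      by (rule sum.inter_filter) (simp add: fB)
    finally show ?thesis .
  qed
  have step2: "(\<Sum>S\<in>SS. if T \<subseteq> S then 1 else 0) = real (card {S. S \<subseteq> U \<and> card S = n \<and> T \<subseteq> S})" for T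
  proof -
    have "(\<Sum>S\<in>SS. if T \<subseteq> S then (1::real) else 0) = (\<Sum>S\<in>{S\<in>SS. T \<subseteq> S}. 1)"
      by (rule sum.inter_filter[symmetric]) (simp add: fS)
    also have "{S\<in>SS. T \<subseteq> S} = {S. S \<subseteq> U \<and> card S = n \<and> T \<subseteq> S}" unfolding SS_def by auto
    finally show ?thesis by simp
  qed
  have "(\<Sum>S\<in>SS. (2::real) ^ card (S \<inter> B)) = (\<Sum>S\<in>SS. \<Sum>T\<in>Pow B. if T \<subseteq> S then 1 else 0)"
    using step1 by simp
  also have "\<dots> = (\<Sum>T\<in>Pow B. \<Sum>S\<in>SS. if T \<subseteq> S then 1 else 0)" by (rule sum.swap)
  also have "\<dots> = (\<Sum>T\<in>Pow B. real (card {S. S \<subseteq> U \<and> card S = n \<and> T \<subseteq> S}))" using step2 by simp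
  also have "\<dots> \<le> (\<Sum>T\<in>Pow B. (real n / real (card U)) ^ card T * real (card SS))"
  proof (rule sum_mono)
    fix T assume "T \<in> Pow B"
    then have "T \<subseteq> U" using assms by auto
    from count_supsets[OF assms(1) this, of n]
    have "real (card {S. S \<subseteq> U \<and> card S = n \<and> T \<subseteq> S}) * real (card U) ^ card T
         \<le> real n ^ card T * real (card SS)" unfolding SS_def .
    moreover have "real (card U) ^ card T > 0" using assms by simp
    ultimately show "real (card {S. S \<subseteq> U \<and> card S = n \<and> T \<subseteq> S}) \<le> (real n / real (card U)) ^ card T * real (card SS)"
      by (simp add: power_divide field_simps)
  qed
  also have "\<dots> = (1 + real n / real (card U)) ^ card B * real (card SS)"
    using sum_pow_card[OF fB, of "real n / real (card U)"] by (simp add: sum_distrib_right[symmetric])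
  finally show ?thesis unfolding SS_def .
qed



lemma exp23: "exp (2/3::real) \<le> 2"
proof -
  have "1 + (-1/24::real) \<le> exp (-1/24)" by (rule exp_ge_add_one_self)
  then have "23/24 \<le> inverse (exp (1/24::real))" by (simp add: exp_minus)
  then have a: "exp (1/24::real) \<le> 24/23"
    using exp_gt_zero[of "1/24::real"] by (simp add: field_simps inverse_eq_divide)
  have "exp (2/3::real) = exp (1/24) ^ 16" by (subst exp_of_nat_mult[symmetric]) simp
  also have "\<dots> \<le> (24/23) ^ 16" using a by (intro power_mono) auto
  also have "\<dots> \<le> (2::real)" by (simp add: power_divide)
  finally show ?thesis .
qed

lemma exp56: "(2::real) \<le> exp (5/6)"
proof -
  have "1 + 5/6 + (5/6)\<^sup>2/2 \<le> exp (5/6::real)" by (rule exp_lower_Taylor_quadratic) simp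
  then show ?thesis by (simp add: power2_eq_square)
qed

lemma upper_tail:
  assumes "finite U" "B \<subseteq> U" "card U > 0"
    and "real (card B) * real n \<le> real l * real (card U) / 2"
  shows "real (card {S. S \<subseteq> U \<and> card S = n \<and> l \<le> card (S \<inter> B)})
         \<le> exp (- real l / 6) * real (card {S. S \<subseteq> U \<and> card S = n})"
proof -
  define SS where "SS = {S. S \<subseteq> U \<and> card S = n}"
  define E where "E = {S. S \<subseteq> U \<and> card S = n \<and> l \<le> card (S \<inter> B)}"
  define p where "p = real n / real (card U)"
  have fS: "finite SS" unfolding SS_def using assms(1) by (rule rev_finite_subset[OF finite_Pow_iff[THEN iffD2]]) auto
  have ES: "E \<subseteq> SS" unfolding E_def SS_def by auto
  have p0: "p \<ge> 0" unfolding p_def by simp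
  have mp: "real (card B) * p \<le> real l / 2"
    using assms(3,4) unfolding p_def by (simp add: field_simps)
  have "real (card E) * 2 ^ l = (\<Sum>S\<in>E. (2::real) ^ l)" by simp
  also have "\<dots> \<le> (\<Sum>S\<in>E. (2::real) ^ card (S \<inter> B))"
    by (rule sum_mono) (auto simp: E_def intro: power_increasing)
  also have "\<dots> \<le> (\<Sum>S\<in>SS. (2::real) ^ card (S \<inter> B))"
    by (rule sum_mono2[OF fS ES]) auto
  also have "\<dots> \<le> (1 + p) ^ card B * real (card SS)"
    unfolding SS_def p_def by (rule mgf_bound[OF assms(1-3)])
  also have "\<dots> \<le> exp p ^ card B * real (card SS)"
    by (intro mult_right_mono power_mono) (use p0 in auto)
  also have "exp p ^ card B = exp (real (card B) * p)" by (simp add: exp_of_nat_mult)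
  also have "\<dots> \<le> exp (real l / 2)" using mp by simp
  finally have A: "real (card E) * 2 ^ l \<le> exp (real l / 2) * real (card SS)"
    by (simp add: mult_right_mono)
  have "exp (2/3) ^ l \<le> (2::real) ^ l" using exp23 by (intro power_mono) auto
  then have B: "exp (2 * real l / 3) \<le> (2::real) ^ l" by (simp add: exp_of_nat_mult[symmetric] mult.commute)
  have "real (card E) * exp (2 * real l / 3) \<le> exp (real l / 2) * real (card SS)"
    using A B by (meson mult_left_mono of_nat_0_le_iff order_trans)
  then have "real (card E) \<le> exp (real l / 2) * real (card SS) / exp (2 * real l / 3)"
    by (simp add: field_simps)
  also have "\<dots> = exp (real l / 2 - 2 * real l / 3) * real (card SS)"
    unfolding exp_diff by simp
  also have "real l / 2 - 2 * real l / 3 = - real l / 6" by simp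
  finally show ?thesis unfolding E_def SS_def .
qed


lemma compl_sum:
  assumes "finite U" "B \<subseteq> U" "card U > 0" "n \<le> card U"
  shows "(\<Sum>S\<in>{S. S \<subseteq> U \<and> card S = n}. (2::real) ^ card (B - S))
         \<le> (2 - real n / real (card U)) ^ card B * real (card {S. S \<subseteq> U \<and> card S = n})"
proof -
  define SS where "SS = {S. S \<subseteq> U \<and> card S = n}"
  define SS' where "SS' = {S. S \<subseteq> U \<and> card S = card U - n}"
  have bij: "bij_betw (\<lambda>S. U - S) SS' SS"
  proof (rule bij_betw_byWitness[where f' = "\<lambda>S. U - S"])
    show "\<forall>a\<in>SS'. U - (U - a) = a" unfolding SS'_def by auto
    show "\<forall>a\<in>SS. U - (U - a) = a" unfolding SS_def by auto
    show "(\<lambda>S. U - S) ` SS' \<subseteq> SS" unfolding SS'_def SS_def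
      using assms by (auto simp: card_Diff_subset finite_subset)
    show "(\<lambda>S. U - S) ` SS \<subseteq> SS'" unfolding SS'_def SS_def
      using assms by (auto simp: card_Diff_subset finite_subset)
  qed
  have "(\<Sum>S\<in>SS. (2::real) ^ card (B - S)) = (\<Sum>S\<in>SS'. (2::real) ^ card (B - (U - S)))"
    using sum.reindex_bij_betw[OF bij, of "\<lambda>S. (2::real) ^ card (B - S)"] by simp
  also have "\<dots> = (\<Sum>S\<in>SS'. (2::real) ^ card (S \<inter> B))"
  proof (rule sum.cong)
    fix S assume "S \<in> SS'"
    have "B - (U - S) = S \<inter> B" using assms(2) by auto
    then show "(2::real) ^ card (B - (U - S)) = 2 ^ card (S \<inter> B)" by simp
  qed simp
  also have "\<dots> \<le> (1 + real (card U - n) / real (card U)) ^ card B * real (card SS')"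
    unfolding SS'_def by (rule mgf_bound[OF assms(1-3)])
  also have "1 + real (card U - n) / real (card U) = 2 - real n / real (card U)"
    using assms(3,4) by (simp add: field_simps of_nat_diff)
  also have "card SS' = card SS" using bij_betw_same_card[OF bij] .
  finally show ?thesis unfolding SS_def .
qed

lemma lower_tail:
  assumes "finite U" "B \<subseteq> U" "card U > 0" "n \<le> card U"
    and "2 * real r * real (card U) \<le> real (card B) * real n"
  shows "real (card {S. S \<subseteq> U \<and> card S = n \<and> card (S \<inter> B) \<le> r})
         \<le> exp (- real r / 6) * real (card {S. S \<subseteq> U \<and> card S = n})"
proof -
  define SS where "SS = {S. S \<subseteq> U \<and> card S = n}"
  define E where "E = {S. S \<subseteq> U \<and> card S = n \<and> card (S \<inter> B) \<le> r}"
  define p where "p = real n / real (card U)"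
  define m where "m = card B"
  have fS: "finite SS" unfolding SS_def using assms(1) by (rule rev_finite_subset[OF finite_Pow_iff[THEN iffD2]]) auto
  have fB: "finite B" using assms finite_subset by blast
  have ES: "E \<subseteq> SS" unfolding E_def SS_def by auto
  have p0: "p \<ge> 0" "p \<le> 1" unfolding p_def using assms(3,4) by auto
  have mp: "2 * real r \<le> real m * p"
    using assms(3,5) unfolding p_def m_def by (simp add: field_simps)
  have rm: "r \<le> m"
  proof -
    have "real m * p \<le> real m" using p0 by (simp add: mult_left_le)
    then show ?thesis using mp by linarith
  qed
  have "real (card E) * 2 ^ (m - r) = (\<Sum>S\<in>E. (2::real) ^ (m - r))" by simp
  also have "\<dots> \<le> (\<Sum>S\<in>E. (2::real) ^ card (B - S))"
  proof (rule sum_mono)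
    fix S assume "S \<in> E"
    then have "card (S \<inter> B) \<le> r" unfolding E_def by auto
    moreover have "card (B - S) = m - card (B \<inter> S)" unfolding m_def using fB by (simp add: card_Diff_subset_Int)
    ultimately have "m - r \<le> card (B - S)" by (simp add: Int_commute)
    then show "(2::real) ^ (m - r) \<le> 2 ^ card (B - S)" by (rule power_increasing) simp
  qed
  also have "\<dots> \<le> (\<Sum>S\<in>SS. (2::real) ^ card (B - S))"
    by (rule sum_mono2[OF fS ES]) auto
  also have "\<dots> \<le> (2 - p) ^ m * real (card SS)"
    unfolding SS_def p_def m_def by (rule compl_sum[OF assms(1-4)])
  also have "(2 - p) ^ m = 2 ^ m * (1 - p / 2) ^ m"
    by (simp add: power_mult_distrib[symmetric] algebra_simps)
  also have "(1 - p / 2) ^ m \<le> exp (- p / 2) ^ m"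
    using exp_ge_add_one_self[of "- p / 2"] p0 by (intro power_mono) auto
  also have "exp (- p / 2) ^ m = exp (- (real m * p) / 2)" by (simp add: exp_of_nat_mult[symmetric])
  also have "\<dots> \<le> exp (- real r)" using mp by simp
  finally have A: "real (card E) * 2 ^ (m - r) \<le> 2 ^ m * exp (- real r) * real (card SS)"
    by (simp add: mult_right_mono mult_left_mono)
  have "(2::real) ^ m = 2 ^ (m - r) * 2 ^ r" using rm by (simp add: power_add[symmetric])
  with A have "real (card E) * 2 ^ (m - r) \<le> 2 ^ (m - r) * (2 ^ r * exp (- real r) * real (card SS))"
    by (simp add: algebra_simps)
  then have C: "real (card E) \<le> 2 ^ r * exp (- real r) * real (card SS)" by simp
  have "(2::real) ^ r \<le> exp (5/6) ^ r" using exp56 by (intro power_mono) auto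
  also have "\<dots> = exp (5 * real r / 6)" by (simp add: exp_of_nat_mult[symmetric] mult.commute)
  finally have D: "(2::real) ^ r \<le> exp (5 * real r / 6)" .
  have "2 ^ r * exp (- real r) * real (card SS) \<le> exp (5 * real r / 6) * exp (- real r) * real (card SS)"
    using D by (intro mult_right_mono) auto
  also have "exp (5 * real r / 6) * exp (- real r) = exp (- real r / 6)"
    by (simp add: exp_add[symmetric])
  finally show ?thesis using C unfolding E_def SS_def by linarith
qed



theorem lemmaF4:
  fixes xs :: "real set" and d' n :: nat and L R :: int
    and K :: "real set \<Rightarrow> (real \<times> real) pmf"
  assumes "finite xs" and "card xs = d'" and "xs \<noteq> {}"
    and "L \<le> R" and "n \<le> d'"
    and K_valid: "\<And>S a b. S \<subseteq> xs \<Longrightarrow> card S = n \<Longrightarrow> (a, b) \<in> set_pmf (K S) \<Longrightarrow>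
           a \<le> b \<and> L \<le> int (card (S \<inter> {a..b})) \<and> int (card (S \<inter> {a..b})) \<le> R"
  shows "measure_pmf.prob (interval_process xs n K)
           {(S, (a, b)). real_of_int L / 2 * real d' / real n < real (card (xs \<inter> {a..b}))
                       \<and> real (card (xs \<inter> {a..b})) < 2 * real_of_int R * real d' / real n}
         \<ge> 1 - 3 * real d' * exp (- real_of_int L / 6)"
proof (cases "L \<le> 0")
  case True
  have "d' \<ge> 1" using assms(1-3) by (metis card_0_eq less_one not_le)
  moreover have "exp (- real_of_int L / 6) \<ge> 1" using True by simp
  ultimately have "1 * 1 \<le> (3 * real d') * exp (- real_of_int L / 6)"
    by (intro mult_mono) auto
  moreover have "measure_pmf.prob (interval_process xs n K)
           {(S, (a, b)). real_of_int L / 2 * real d' / real n < real (card (xs \<inter> {a..b}))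
                       \<and> real (card (xs \<inter> {a..b})) < 2 * real_of_int R * real d' / real n} \<ge> 0"
    by (rule measure_nonneg)
  ultimately show ?thesis by linarith
next
  case False
  define SS where "SS = {S. S \<subseteq> xs \<and> card S = n}"
  define G where "G = {(S :: real set, (a, b)). real_of_int L / 2 * real d' / real n < real (card (xs \<inter> {a..b}))
                       \<and> real (card (xs \<inter> {a..b})) < 2 * real_of_int R * real d' / real n}"
  define M where "M = interval_process xs n K"
  have fS: "finite SS" unfolding SS_def using assms(1) by (rule rev_finite_subset[OF finite_Pow_iff[THEN iffD2]]) auto
  have "n \<le> card xs" using assms(2,5) by simp
  then obtain S0 where S0: "S0 \<subseteq> xs" "card S0 = n"
    by (rule obtain_subset_with_card_n)
  then have neS: "SS \<noteq> {}" unfolding SS_def by auto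
  obtain a0 b0 where "(a0, b0) \<in> set_pmf (K S0)"
    using set_pmf_not_empty[of "K S0"] by (metis all_not_in_conv prod.collapse)
  from K_valid[OF S0 this] have "L \<le> int (card (S0 \<inter> {a0..b0}))" by simp
  moreover have "card (S0 \<inter> {a0..b0}) \<le> n" using S0 assms(1)
    by (metis card_mono finite_subset inf_le1)
  ultimately have nL: "L \<le> int n" by simp
  have npos: "n > 0" using nL False by simp
  have dpos: "d' > 0" using npos assms(5) by simp
  define l where "l = nat L"
  define r where "r = nat R"
  have lL: "real l = real_of_int L" unfolding l_def using False by simp
  have rR: "real r = real_of_int R" unfolding r_def using False assms(4) by simp
  have lr: "l \<le> r" unfolding l_def r_def using assms(4) by simp
  define c1 where "c1 = real_of_int L / 2 * real d' / real n"
  define c2 where "c2 = 2 * real_of_int R * real d' / real n"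
  define P1 where "P1 x = {b \<in> xs. x \<le> b \<and> real (card (xs \<inter> {x..b})) \<le> c1}" for x
  define P2 where "P2 x = {b \<in> xs. x \<le> b \<and> c2 \<le> real (card (xs \<inter> {x..b}))}" for x
  define B1 where "B1 x = xs \<inter> {x..Max (P1 x)}" for x
  define B2 where "B2 x = xs \<inter> {x..Min (P2 x)}" for x
  define E1 where "E1 x = {S \<in> SS. P1 x \<noteq> {} \<and> l \<le> card (S \<inter> B1 x)}" for x
  define E2 where "E2 x = {S \<in> SS. P2 x \<noteq> {} \<and> card (S \<inter> B2 x) \<le> r}" for x
  define Bad where "Bad = (\<Union>x\<in>xs. E1 x \<union> E2 x)"
  have fP1: "finite (P1 x)" for x unfolding P1_def using assms(1) by simp
  have fP2: "finite (P2 x)" for x unfolding P2_def using assms(1) by simp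
  have cSS: "card SS = card {S. S \<subseteq> xs \<and> card S = n}" unfolding SS_def ..
  have bE1: "real (card (E1 x)) \<le> exp (- real l / 6) * real (card SS)" for x
  proof (cases "P1 x = {}")
    case True
    then have "E1 x = {}" unfolding E1_def by auto
    then show ?thesis by simp
  next
    case False
    have "Max (P1 x) \<in> P1 x" using False fP1 by simp
    then have cB: "real (card (B1 x)) \<le> c1" unfolding P1_def B1_def by auto
    have "real (card (B1 x)) * real n \<le> real l * real (card xs) / 2"
      using cB npos unfolding c1_def lL assms(2) by (simp add: field_simps)
    from upper_tail[OF assms(1) _ _ this] assms(1-3)
    have T: "real (card {S. S \<subseteq> xs \<and> card S = n \<and> l \<le> card (S \<inter> B1 x)}) \<le> exp (- real l / 6) * real (card SS)"
      unfolding cSS B1_def using dpos by (simp add: card_gt_0_iff)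
    have "E1 x \<subseteq> {S. S \<subseteq> xs \<and> card S = n \<and> l \<le> card (S \<inter> B1 x)}" unfolding E1_def SS_def by auto
    moreover have "finite {S. S \<subseteq> xs \<and> card S = n \<and> l \<le> card (S \<inter> B1 x)}"
      by (rule rev_finite_subset[OF fS[unfolded SS_def]]) auto
    ultimately have C: "card (E1 x) \<le> card {S. S \<subseteq> xs \<and> card S = n \<and> l \<le> card (S \<inter> B1 x)}"
      by (simp add: card_mono)
    show ?thesis using T C by linarith
  qed
  have bE2: "real (card (E2 x)) \<le> exp (- real l / 6) * real (card SS)" for x
  proof (cases "P2 x = {}")
    case True
    then have "E2 x = {}" unfolding E2_def by auto
    then show ?thesis by simp
  next
    case False
    have "Min (P2 x) \<in> P2 x" using False fP2 by simp
    then have cB: "c2 \<le> real (card (B2 x))" unfolding P2_def B2_def by auto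
    have "2 * real r * real (card xs) \<le> real (card (B2 x)) * real n"
      using cB npos unfolding c2_def rR assms(2) by (simp add: field_simps)
    from lower_tail[OF assms(1) _ _ _ this] assms(1-3,5)
    have T: "real (card {S. S \<subseteq> xs \<and> card S = n \<and> card (S \<inter> B2 x) \<le> r}) \<le> exp (- real r / 6) * real (card SS)"
      unfolding cSS B2_def using dpos by (simp add: card_gt_0_iff)
    have "E2 x \<subseteq> {S. S \<subseteq> xs \<and> card S = n \<and> card (S \<inter> B2 x) \<le> r}" unfolding E2_def SS_def by auto
    moreover have "finite {S. S \<subseteq> xs \<and> card S = n \<and> card (S \<inter> B2 x) \<le> r}"
      by (rule rev_finite_subset[OF fS[unfolded SS_def]]) auto
    ultimately have C: "card (E2 x) \<le> card {S. S \<subseteq> xs \<and> card S = n \<and> card (S \<inter> B2 x) \<le> r}"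
      by (simp add: card_mono)
    have "exp (- real r / 6) * real (card SS) \<le> exp (- real l / 6) * real (card SS)"
      using lr by (intro mult_right_mono) auto
    then show ?thesis using T C by linarith
  qed
  have fE: "finite (E1 x \<union> E2 x)" for x unfolding E1_def E2_def using fS by auto
  have "real (card Bad) \<le> (\<Sum>x\<in>xs. real (card (E1 x \<union> E2 x)))"
    unfolding Bad_def using card_UN_le[OF assms(1), of "\<lambda>x. E1 x \<union> E2 x"]
    by (simp only: of_nat_sum[symmetric] of_nat_le_iff)
  also have "\<dots> \<le> (\<Sum>x\<in>xs. 2 * exp (- real l / 6) * real (card SS))"
  proof (rule sum_mono)
    fix x assume "x \<in> xs"
    have "card (E1 x \<union> E2 x) \<le> card (E1 x) + card (E2 x)" by (rule card_Un_le)
    then show "real (card (E1 x \<union> E2 x)) \<le> 2 * exp (- real l / 6) * real (card SS)"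
      using bE1[of x] bE2[of x] by linarith
  qed
  also have "\<dots> = real d' * (2 * exp (- real l / 6) * real (card SS))" using assms(2) by simp
  finally have cardBad: "real (card Bad) \<le> real d' * (2 * exp (- real l / 6) * real (card SS))" .

  have setM: "fst z \<in> SS \<and> snd z \<in> set_pmf (K (fst z))" if "z \<in> set_pmf M" for z
    using that unfolding M_def interval_process_def by (auto simp: set_pmf_of_set[OF neS fS] SS_def[symmetric])
  have cover: "fst z \<in> Bad" if "z \<in> set_pmf M" "z \<notin> G" for z
  proof -
    obtain S a b where z: "z = (S, (a, b))" by (metis prod.collapse)
    have S: "S \<in> SS" "(a, b) \<in> set_pmf (K S)" using setM[OF that(1)] z by auto
    then have Sx: "S \<subseteq> xs" "card S = n" unfolding SS_def by auto
    from K_valid[OF Sx S(2)] have v: "a \<le> b" "L \<le> int (card (S \<inter> {a..b}))" "int (card (S \<inter> {a..b})) \<le> R"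
      by auto
    define J where "J = xs \<inter> {a..b}"
    have SJ: "S \<inter> {a..b} = S \<inter> J" unfolding J_def using Sx by auto
    have fJ: "finite J" unfolding J_def using assms(1) by simp
    have "card (S \<inter> J) \<ge> 1" using v(2) False unfolding SJ by linarith
    then have Jne: "J \<noteq> {}" by (metis card.empty inf_bot_right not_one_le_zero)
    define x where "x = Min J"
    define y where "y = Max J"
    have xJ: "x \<in> J" and yJ: "y \<in> J" unfolding x_def y_def using fJ Jne by auto
    have xy: "x \<le> y" unfolding x_def y_def using fJ Jne xJ by (metis Max_ge x_def)
    have xs_x: "x \<in> xs" using xJ unfolding J_def by auto
    have Jeq: "J = xs \<inter> {x..y}"
    proof
      show "J \<subseteq> xs \<inter> {x..y}"
      proof
        fix z assume "z \<in> J"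
        then have "x \<le> z" "z \<le> y" "z \<in> xs" unfolding x_def y_def using fJ by (auto simp: J_def)
        then show "z \<in> xs \<inter> {x..y}" by auto
      qed
      show "xs \<inter> {x..y} \<subseteq> J" using xJ yJ unfolding J_def by auto
    qed
    have yP: "y \<in> xs" "x \<le> y" using yJ xy unfolding J_def by auto
    have nG: "\<not> (c1 < real (card J) \<and> real (card J) < c2)"
      using that(2) unfolding z G_def c1_def c2_def J_def by simp
    show ?thesis
    proof (cases "real (card J) \<le> c1")
      case True
      then have "y \<in> P1 x" unfolding P1_def using yP Jeq by auto
      then have P1ne: "P1 x \<noteq> {}" and "y \<le> Max (P1 x)" using fP1 by auto
      then have "J \<subseteq> B1 x" unfolding B1_def Jeq by auto
      then have "card (S \<inter> J) \<le> card (S \<inter> B1 x)" using assms(1) unfolding B1_def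
        by (intro card_mono) auto
      moreover have "L \<le> int (card (S \<inter> J))" using v(2) SJ by simp
      ultimately have "l \<le> card (S \<inter> B1 x)" unfolding l_def by linarith
      then have "S \<in> E1 x" unfolding E1_def using S P1ne by auto
      then show ?thesis unfolding Bad_def z using xs_x by auto
    next
      case False
      then have "c2 \<le> real (card J)" using nG by linarith
      then have "y \<in> P2 x" unfolding P2_def using yP Jeq by auto
      then have P2ne: "P2 x \<noteq> {}" and "Min (P2 x) \<le> y" using fP2 by auto
      then have "B2 x \<subseteq> J" unfolding B2_def Jeq by auto
      then have "card (S \<inter> B2 x) \<le> card (S \<inter> J)" using fJ by (intro card_mono) auto
      moreover have "int (card (S \<inter> J)) \<le> R" using v(3) SJ by simp
      ultimately have "card (S \<inter> B2 x) \<le> r" unfolding r_def by linarith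
      then have "S \<in> E2 x" unfolding E2_def using S P2ne by auto
      then show ?thesis unfolding Bad_def z using xs_x by auto
    qed
  qed
  have mapM: "map_pmf fst M = pmf_of_set SS"
    unfolding M_def interval_process_def SS_def
    by (simp add: map_bind_pmf pmf.map_comp o_def bind_return_pmf')
  have "measure_pmf.prob M (- G) = measure_pmf.prob M (- G \<inter> set_pmf M)"
    by (simp add: measure_Int_set_pmf)
  also have "\<dots> \<le> measure_pmf.prob M (fst -` Bad)"
    by (rule measure_pmf.finite_measure_mono) (use cover in auto)
  also have "\<dots> = measure_pmf.prob (pmf_of_set SS) Bad"
    by (simp flip: mapM)
  also have "\<dots> = real (card (SS \<inter> Bad)) / real (card SS)"
    by (simp add: measure_pmf_of_set[OF neS fS])
  also have "SS \<inter> Bad = Bad" unfolding Bad_def E1_def E2_def by auto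
  also have "real (card Bad) / real (card SS) \<le> real d' * (2 * exp (- real l / 6))"
    using cardBad neS fS by (simp add: field_simps card_gt_0_iff)
  finally have pc: "measure_pmf.prob M (- G) \<le> 2 * real d' * exp (- real_of_int L / 6)"
    unfolding lL by simp
  have "measure_pmf.prob M G = 1 - measure_pmf.prob M (- G)"
    using measure_pmf.prob_compl[of G M] by (simp add: Compl_eq_Diff_UNIV)
  moreover have "2 * real d' * exp (- real_of_int L / 6) \<le> 3 * real d' * exp (- real_of_int L / 6)"
    by simp
  ultimately show ?thesis using pc unfolding M_def G_def by linarith
qed


end
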